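(* Let $k\ge 2$ be a power of $2$ and let $S$ be a subset of $\mathbb F_k^2$. Then there exists $\mathbf u\in\mathbb F_k^2$ such that for every subset $Z\subseteq\mathbb F_k$ with exactly $k/2$ elements, \[|\{\mathbf s\in S:\mathbf s\cdot\mathbf u\in Z\}|\le\frac{|S|+k^{1.5}}{2}.\]
   Context: $\mathbb F_k$ is the finite field with $k$ elements, and for $\mathbf s=(s_1,s_2),\mathbf u=(u_1,u_2)\in\mathbb F_k^2$, $\mathbf s\cdot\mathbf u=s_1u_1+s_2u_2\in\mathbb F_k$. *)

theory Defs
  imports Complex_Main "HOL-Library.Cardinality"
begin

definition dot2 :: "'a::field \<times> 'a \<Rightarrow> 'a \<times> 'a \<Rightarrow> 'a" where
  "dot2 s u = fst s * fst u + snd s * snd u"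

end

theory Submission
  imports Defs "HOL-Analysis.Convex"
begin

lemma card_orth_le:
  fixes v :: "'a::{finite,field} \<times> 'a"
  assumes "v \<noteq> 0"
  shows "card {u. dot2 v u = 0} \<le> CARD('a)"
proof (cases "fst v = 0")
  case False
  have "inj_on snd {u. dot2 v u = 0}"
  proof (rule inj_onI)
    fix x y assume "x \<in> {u. dot2 v u = 0}" "y \<in> {u. dot2 v u = 0}" "snd x = snd y"
    then have "fst v * fst x = fst v * fst y" by (simp add: dot2_def add_eq_0_iff)
    with False have "fst x = fst y" by simp
    with \<open>snd x = snd y\<close> show "x = y" by (simp add: prod_eq_iff)
  qed
  then have "card {u. dot2 v u = 0} = card (snd ` {u. dot2 v u = 0})" by (simp add: card_image)
  also have "\<dots> \<le> CARD('a)" by (rule card_mono) auto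
  finally show ?thesis .
next
  case True
  with assms have nz: "snd v \<noteq> 0" by (simp add: prod_eq_iff)
  have "inj_on fst {u. dot2 v u = 0}"
  proof (rule inj_onI)
    fix x y assume "x \<in> {u. dot2 v u = 0}" "y \<in> {u. dot2 v u = 0}" "fst x = fst y"
    then have "snd v * snd x = 0" "snd v * snd y = 0" using True by (simp_all add: dot2_def)
    with nz have "snd x = snd y" by simp
    with \<open>fst x = fst y\<close> show "x = y" by (simp add: prod_eq_iff)
  qed
  then have "card {u. dot2 v u = 0} = card (fst ` {u. dot2 v u = 0})" by (simp add: card_image)
  also have "\<dots> \<le> CARD('a)" by (rule card_mono) auto
  finally show ?thesis .
qed

lemma pair_count:
  fixes s s' :: "'a::{finite,field} \<times> 'a"
  shows "(\<Sum>u\<in>UNIV. of_bool (dot2 s u = dot2 s' u) :: real)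
         \<le> of_bool (s = s') * real CARD('a) ^ 2 + real CARD('a)"
proof -
  have eq: "(\<Sum>u\<in>UNIV. of_bool (dot2 s u = dot2 s' u) :: real) = real (card {u. dot2 (s - s') u = 0})"
  proof -
    have "\<And>u. (dot2 s u = dot2 s' u) = (dot2 (s - s') u = 0)"
      by (simp add: dot2_def algebra_simps)
    then show ?thesis by (simp add: of_bool_def sum.If_cases)
  qed
  show ?thesis
  proof (cases "s = s'")
    case True
    have "card {u::'a\<times>'a. True} = CARD('a) ^ 2"
      by (simp add: power2_eq_square)
    then show ?thesis unfolding eq using True by (simp add: dot2_def)
  next
    case False
    then have "s - s' \<noteq> 0" by simp
    from card_orth_le[OF this] show ?thesis unfolding eq using False by simp
  qed
qed

lemma delta_sum: "(\<Sum>t\<in>(UNIV::'a::finite set). of_bool (a = t) :: real) = 1"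
  by (simp add: of_bool_def)

lemma delta_sum2: "(\<Sum>t\<in>(UNIV::'a::finite set). of_bool (a = t) * of_bool (b = t) :: real) = of_bool (a = b)"
proof -
  have "\<And>t. (of_bool (a = t) * of_bool (b = t) :: real) = of_bool (a = b) * of_bool (a = t)"
    by auto
  then show ?thesis by (simp add: sum_distrib_left[symmetric] delta_sum del: of_bool_eq)
qed

lemma delta_sumZ: "finite Z \<Longrightarrow> (\<Sum>t\<in>Z. (of_bool (x = t)::real)) = of_bool (x \<in> Z)"
  by (induction Z rule: finite_induct) auto

theorem mainTheorem2:
  fixes S :: "('a::{finite,field} \<times> 'a) set"
  assumes "\<exists>m::nat. m \<ge> 1 \<and> CARD('a) = 2 ^ m"
  shows "\<exists>u :: 'a \<times> 'a. \<forall>Z :: 'a set. 2 * card Z = CARD('a) \<longrightarrow>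
           real (card {s \<in> S. dot2 s u \<in> Z}) \<le> (real (card S) + real CARD('a) powr 1.5) / 2"
proof -
  define q where "q = real CARD('a)"
  define n where "n = real (card S)"
  define N where "N u t = (\<Sum>s\<in>S. of_bool (dot2 s u = t) :: real)" for u :: "'a \<times> 'a" and t
  define c where "c = n / q"
  define D where "D u = (\<Sum>t\<in>UNIV. (N u t - c)^2)" for u
  have qpos: "q > 0" unfolding q_def by simp
  have finS: "finite S" by simp
  have nle: "n \<le> q^2"
  proof -
    have "card S \<le> CARD('a \<times> 'a)" by (rule card_mono) auto
    then show ?thesis unfolding n_def q_def by (simp add: power2_eq_square) (metis of_nat_le_iff of_nat_mult)
  qed
  have n0: "n \<ge> 0" unfolding n_def by simp
  have sumN: "(\<Sum>t\<in>UNIV. N u t) = n" for u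
  proof -
    have "(\<Sum>t\<in>UNIV. N u t) = (\<Sum>s\<in>S. \<Sum>t\<in>UNIV. of_bool (dot2 s u = t) :: real)"
      unfolding N_def by (rule sum.swap)
    also have "\<dots> = (\<Sum>s\<in>S. 1)" by (simp only: delta_sum)
    finally show ?thesis unfolding n_def by simp
  qed
  have sumN2: "(\<Sum>t\<in>UNIV. (N u t)^2) = (\<Sum>s\<in>S. \<Sum>s'\<in>S. of_bool (dot2 s u = dot2 s' u) :: real)" for u
  proof -
    have "(\<Sum>t\<in>UNIV. (N u t)^2) = (\<Sum>t\<in>UNIV. \<Sum>s\<in>S. \<Sum>s'\<in>S. of_bool (dot2 s u = t) * of_bool (dot2 s' u = t) :: real)"
      unfolding N_def power2_eq_square by (simp only: sum_product)
    also have "\<dots> = (\<Sum>s\<in>S. \<Sum>t\<in>UNIV. \<Sum>s'\<in>S. of_bool (dot2 s u = t) * of_bool (dot2 s' u = t) :: real)"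
      by (rule sum.swap)
    also have "\<dots> = (\<Sum>s\<in>S. \<Sum>s'\<in>S. \<Sum>t\<in>UNIV. of_bool (dot2 s u = t) * of_bool (dot2 s' u = t) :: real)"
      by (rule sum.cong[OF refl], rule sum.swap)
    also have "\<dots> = (\<Sum>s\<in>S. \<Sum>s'\<in>S. of_bool (dot2 s u = dot2 s' u) :: real)"
      by (simp only: delta_sum2)
    finally show ?thesis .
  qed
  have Dexp: "D u = (\<Sum>t\<in>UNIV. (N u t)^2) - n^2 / q" for u
  proof -
    have "D u = (\<Sum>t\<in>UNIV. (N u t)^2 - 2 * c * N u t + c^2)"
      unfolding D_def by (rule sum.cong) (auto simp: power2_eq_square algebra_simps)
    also have "\<dots> = (\<Sum>t\<in>UNIV. (N u t)^2) - 2 * c * (\<Sum>t\<in>UNIV. N u t) + q * c^2"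
      by (simp add: sum.distrib sum_subtractf sum_distrib_left q_def)
    also have "\<dots> = (\<Sum>t\<in>UNIV. (N u t)^2) - n^2 / q"
      using qpos by (simp add: sumN c_def power2_eq_square field_simps)
    finally show ?thesis .
  qed
  have tot: "(\<Sum>u\<in>UNIV. \<Sum>t\<in>UNIV. (N u t)^2) \<le> n * q^2 + n^2 * q"
  proof -
    have "(\<Sum>u\<in>UNIV. \<Sum>t\<in>UNIV. (N u t)^2) = (\<Sum>u\<in>UNIV. \<Sum>s\<in>S. \<Sum>s'\<in>S. of_bool (dot2 s u = dot2 s' u) :: real)"
      by (simp only: sumN2)
    also have "\<dots> = (\<Sum>s\<in>S. \<Sum>u\<in>UNIV. \<Sum>s'\<in>S. of_bool (dot2 s u = dot2 s' u) :: real)"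
      by (rule sum.swap)
    also have "\<dots> = (\<Sum>s\<in>S. \<Sum>s'\<in>S. \<Sum>u\<in>UNIV. of_bool (dot2 s u = dot2 s' u) :: real)"
      by (rule sum.cong[OF refl], rule sum.swap)
    also have "\<dots> \<le> (\<Sum>s\<in>S. \<Sum>s'\<in>S. of_bool (s = s') * q ^ 2 + q)"
      unfolding q_def by (intro sum_mono pair_count)
    also have "\<dots> = (\<Sum>s\<in>S. q^2 + n * q)"
    proof (rule sum.cong[OF refl])
      fix s assume "s \<in> S"
      have "(\<Sum>s'\<in>S. of_bool (s = s') * q ^ 2 + q) = (\<Sum>s'\<in>S. of_bool (s = s')) * q^2 + n * q"
        by (simp add: sum.distrib sum_distrib_right n_def del: sum_of_bool_eq)
      also have "(\<Sum>s'\<in>S. of_bool (s = s') :: real) = 1"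
        using \<open>s \<in> S\<close> by (simp add: of_bool_def)
      finally show "(\<Sum>s'\<in>S. of_bool (s = s') * q ^ 2 + q) = q^2 + n * q" by simp
    qed
    also have "\<dots> = n * q^2 + n^2 * q" by (simp add: n_def power2_eq_square algebra_simps)
    finally show ?thesis .
  qed
  have sumD: "(\<Sum>u\<in>UNIV. D u) \<le> q^2 * q^2"
  proof -
    have "(\<Sum>u\<in>UNIV. D u) = (\<Sum>u\<in>UNIV. \<Sum>t\<in>UNIV. (N u t)^2) - q^2 * (n^2 / q)"
      by (simp add: Dexp sum_subtractf q_def power2_eq_square)
    also have "\<dots> \<le> n * q^2" using tot qpos by (simp add: power2_eq_square field_simps)
    also have "\<dots> \<le> q^2 * q^2" using nle qpos by (intro mult_right_mono) auto
    finally show ?thesis .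
  qed
  obtain u where Du: "D u \<le> q^2"
  proof (rule ccontr)
    assume "\<not> thesis"
    with that have all: "\<And>u. D u > q^2" by (meson not_le)
    have "(\<Sum>u\<in>(UNIV::('a\<times>'a) set). q^2) < (\<Sum>u\<in>UNIV. D u)"
      by (rule sum_strict_mono) (auto simp: all)
    then have "q^2 * q^2 < (\<Sum>u\<in>UNIV. D u)" by (simp add: q_def power2_eq_square)
    with sumD show False by simp
  qed
  show ?thesis
  proof (intro exI allI impI)
    fix Z :: "'a set"
    assume Zc: "2 * card Z = CARD('a)"
    define P where "P = real CARD('a) powr 1.5"
    define dev where "dev t = N u t - c" for t
    define X where "X = real (card {s \<in> S. dot2 s u \<in> Z}) - n / 2"
    have cntZ: "real (card {s \<in> S. dot2 s u \<in> Z}) = (\<Sum>t\<in>Z. N u t)"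
    proof -
      have "real (card {s \<in> S. dot2 s u \<in> Z}) = (\<Sum>s\<in>S. of_bool (dot2 s u \<in> Z))"
      proof -
        have "{s \<in> S. dot2 s u \<in> Z} = S \<inter> {s. dot2 s u \<in> Z}" by blast
        then show ?thesis using sum_of_bool_eq[OF finS, of "\<lambda>s. dot2 s u \<in> Z", where 'a=real] by simp
      qed
      also have "\<dots> = (\<Sum>s\<in>S. \<Sum>t\<in>Z. of_bool (dot2 s u = t))"
        by (rule sum.cong[OF refl], rule delta_sumZ[symmetric]) simp
      also have "\<dots> = (\<Sum>t\<in>Z. N u t)" unfolding N_def by (rule sum.swap)
      finally show ?thesis .
    qed
    have cZ0: "2 * real (card Z) = q" unfolding q_def using arg_cong[OF Zc, of real] by simp
    then have cZ: "real (card Z) = q / 2" by simp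
    have X1: "X = (\<Sum>t\<in>Z. dev t)"
    proof -
      have "real (card Z) * c = (q/2) * (n / q)" by (simp only: cZ c_def)
      also have "\<dots> = n / 2" using qpos by simp
      finally have "real (card Z) * c = n / 2" .
      then show ?thesis unfolding X_def cntZ dev_def by (simp add: sum_subtractf)
    qed
    have Zsub: "Z \<subseteq> UNIV" by simp
    have devsum: "(\<Sum>t\<in>UNIV. dev t) = 0"
      unfolding dev_def using qpos by (simp add: sum_subtractf sumN c_def q_def)
    have X2: "- X = (\<Sum>t\<in>UNIV - Z. dev t)"
      using sum_diff[OF _ Zsub, of dev] devsum X1 by simp
    have cZc: "real (card (UNIV - Z)) = q / 2"
    proof -
      have "card (UNIV - Z) = CARD('a) - card Z" by (simp add: card_Diff_subset)
      then show ?thesis using Zc cZ unfolding q_def by simp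
    qed
    have D2: "D u = (\<Sum>t\<in>Z. (dev t)^2) + (\<Sum>t\<in>UNIV - Z. (dev t)^2)"
      using sum_diff[OF _ Zsub, of "\<lambda>t. (dev t)^2"] unfolding D_def dev_def by simp
    have cs1: "X^2 \<le> (\<Sum>t\<in>Z. (dev t)^2) * (q/2)"
      using sum_squared_le_sum_of_squares[of dev Z] X1 cZ by simp
    have cs2: "X^2 \<le> (\<Sum>t\<in>UNIV - Z. (dev t)^2) * (q/2)"
      using sum_squared_le_sum_of_squares[of dev "UNIV - Z"] X2[symmetric] cZc by simp
    have "D u * (q/2) \<le> q^2 * (q/2)" using Du qpos by (simp add: mult_right_mono)
    then have "2 * X^2 \<le> q^2 * (q/2)" using cs1 cs2 D2 by (simp add: distrib_right)
    then have sq: "(2 * X)^2 \<le> q^3" by (simp add: power2_eq_square power3_eq_cube)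
    have P2: "P^2 = q^3"
    proof -
      have "P^2 = P * P" by (simp only: power2_eq_square)
      also have "\<dots> = q powr (1.5 + 1.5)" unfolding P_def q_def by (simp only: powr_add)
      also have "\<dots> = q powr (real 3)"
      proof -
        have h: "(1.5 + 1.5 :: real) = real 3" by simp
        show ?thesis by (simp only: h)
      qed
      also have "\<dots> = q^3" using qpos by (rule powr_realpow)
      finally show ?thesis .
    qed
    have P0: "P \<ge> 0" unfolding P_def by simp
    have "2 * X \<le> P" using power2_le_imp_le[of "2*X" P] sq P2 P0 by simp
    then have "real (card {s \<in> S. dot2 s u \<in> Z}) \<le> (n + P) / 2" unfolding X_def by (simp add: field_simps)
    then show "real (card {s \<in> S. dot2 s u \<in> Z}) \<le> (real (card S) + real CARD('a) powr 1.5) / 2"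
      unfolding P_def n_def .
  qed
qed

end
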